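(* Let $\mathcal{R}$ be a finite valuation ring with residue field of cardinality $q$ and with uniformizer of nilpotency degree $r$ (so $|\mathcal{R}|=q^r$). Let $\mathcal{SP}_\mathcal{R}$ be the sum-product graph on vertex set $\mathcal{R}\times\mathcal{R}$, in which vertices $(a,b)$ and $(c,d)$ are adjacent if and only if $a+c=bd$ (loops allowed). Then $\mathcal{SP}_\mathcal{R}$ is a $\left(q^{2r},\,q^r,\,\sqrt{2rq^{2r-1}}\right)$-graph; that is, it has $q^{2r}$ vertices, it is $q^r$-regular, and its second eigenvalue is at most $\sqrt{2rq^{2r-1}}$.
   Context: A finite valuation ring is a finite commutative ring with identity that is local (has a unique maximal ideal) and principal (every ideal is principal); its maximal ideal is generated by a non-unit $z$ (a uniformizer), the residue field $\mathcal{R}/(z)$ has $q$ elements, and $r$ is the least integer with $z^r=0$. The adjacency matrix $M$ of $\mathcal{SP}_\mathcal{R}$ is the symmetric $0/1$ matrix indexed by $\mathcal{R}\times\mathcal{R}$ with $M_{(a,b),(c,d)}=1$ iff $a+c=bd$ (diagonal entries may be $1$). If $\lambda_1\ge\lambda_2\ge\dots\ge\lambda_n$ are the eigenvalues of $M$, the second eigenvalue is $\max\{\lambda_2,-\lambda_n\}$. An $(n,d,\lambda)$-graph is a $d$-regular graph on $n$ vertices whose second eigenvalue is at most $\lambda$. *)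

theory Defs
  imports "HOL-Analysis.Analysis" "HOL-Computational_Algebra.Polynomial" "HOL-Library.Multiset"
begin

definition ring_ideal :: "'a::comm_ring_1 set \<Rightarrow> bool" where
  "ring_ideal I \<longleftrightarrow> 0 \<in> I \<and> (\<forall>x\<in>I. \<forall>y\<in>I. x + y \<in> I) \<and> (\<forall>x\<in>I. \<forall>a. a * x \<in> I)"

definition principal_ideal :: "'a::comm_ring_1 \<Rightarrow> 'a set" where
  "principal_ideal g = {a * g | a. True}"

definition maximal_ideal :: "'a::comm_ring_1 set \<Rightarrow> bool" where
  "maximal_ideal I \<longleftrightarrow> ring_ideal I \<and> I \<noteq> UNIV \<and>
     (\<forall>J. ring_ideal J \<and> I \<subseteq> J \<longrightarrow> J = I \<or> J = UNIV)"

definition finite_valuation_ring :: "'a::{comm_ring_1,finite} itself \<Rightarrow> bool" where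
  "finite_valuation_ring _ \<longleftrightarrow>
     (\<exists>!I::'a set. maximal_ideal I) \<and>
     (\<forall>I::'a set. ring_ideal I \<longrightarrow> (\<exists>g. I = principal_ideal g))"

text \<open>Cosets of an ideal; the residue ring R/I is the set of cosets.\<close>
definition quotient_cosets :: "'a::comm_ring_1 set \<Rightarrow> 'a set set" where
  "quotient_cosets I = (\<lambda>a. {a + x | x. x \<in> I}) ` UNIV"

definition sum_product_adj :: "'a::comm_ring_1 \<times> 'a \<Rightarrow> 'a \<times> 'a \<Rightarrow> bool" where
  "sum_product_adj v w \<longleftrightarrow> fst v + fst w = snd v * snd w"

definition sum_product_matrix :: "real ^ ('a::{comm_ring_1,finite} \<times> 'a) ^ ('a \<times> 'a)" where
  "sum_product_matrix = (\<chi> v w. if sum_product_adj v w then 1 else 0)"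

definition charpoly :: "real ^ 'n ^ 'n \<Rightarrow> real poly" where
  "charpoly M = det (\<chi> i j. (if i = j then [:0, 1:] else 0) - [:M $ i $ j:])"

definition eigenvalues_desc :: "real ^ 'n ^ 'n \<Rightarrow> real list" where
  "eigenvalues_desc M = rev (sorted_list_of_multiset (proots (charpoly M)))"

definition second_eigenvalue :: "real ^ 'n ^ 'n \<Rightarrow> real" where
  "second_eigenvalue M = max (eigenvalues_desc M ! 1) (- last (eigenvalues_desc M))"

end

theory Submission
  imports Defs
begin


lemma card_fibers:
  fixes f :: "'b \<Rightarrow> 'c"
  assumes "finite S"
  shows "card S = (\<Sum>y\<in>f ` S. card {x\<in>S. f x = y})"
  using sum.image_gen[OF assms, of "\<lambda>_. 1::nat" f] by simp

lemma mem_principal: "x \<in> principal_ideal g \<longleftrightarrow> (\<exists>t. x = t * g)"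
  unfolding principal_ideal_def by auto

lemma ideal_principal: "ring_ideal (principal_ideal (g::'a::comm_ring_1))"
  unfolding ring_ideal_def
proof (intro conjI ballI allI)
  show "0 \<in> principal_ideal g" unfolding mem_principal by (rule exI[of _ 0]) simp
next
  fix x y assume "x \<in> principal_ideal g" "y \<in> principal_ideal g"
  then obtain s t where "x = s * g" "y = t * g" unfolding mem_principal by blast
  then show "x + y \<in> principal_ideal g" unfolding mem_principal
    by (intro exI[of _ "s + t"]) (simp add: algebra_simps)
next
  fix x a assume "x \<in> principal_ideal g"
  then obtain s where "x = s * g" unfolding mem_principal by blast
  then show "a * x \<in> principal_ideal g" unfolding mem_principal
    by (intro exI[of _ "a * s"]) (simp add: algebra_simps)
qed

lemma ideal_neg: "ring_ideal J \<Longrightarrow> x \<in> J \<Longrightarrow> - x \<in> J"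
  unfolding ring_ideal_def by (metis mult_minus1)

lemma ideal_diff: "ring_ideal J \<Longrightarrow> x \<in> J \<Longrightarrow> y \<in> J \<Longrightarrow> x - y \<in> J"
  using ideal_neg[of J y] unfolding ring_ideal_def by (metis diff_conv_add_uminus)

lemma ideal_add: "ring_ideal J \<Longrightarrow> x \<in> J \<Longrightarrow> y \<in> J \<Longrightarrow> x + y \<in> J"
  unfolding ring_ideal_def by blast

lemma ideal_0: "ring_ideal J \<Longrightarrow> 0 \<in> J"
  unfolding ring_ideal_def by blast

lemma coset_eq:
  assumes J: "ring_ideal (J::'a::comm_ring_1 set)"
  shows "{a + x |x. x \<in> J} = {b + x |x. x \<in> J} \<longleftrightarrow> a - b \<in> J"
proof
  assume "{a + x |x. x \<in> J} = {b + x |x. x \<in> J}"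
  moreover have "a \<in> {a + x |x. x \<in> J}" using ideal_0[OF J] by (intro CollectI exI[of _ 0]) simp
  ultimately obtain x where "x \<in> J" "a = b + x" by auto
  then show "a - b \<in> J" by simp
next
  assume ab: "a - b \<in> J"
  show "{a + x |x. x \<in> J} = {b + x |x. x \<in> J}"
  proof (intro set_eqI iffI)
    fix y assume "y \<in> {a + x |x. x \<in> J}"
    then obtain x where x: "x \<in> J" "y = a + x" by auto
    then show "y \<in> {b + x |x. x \<in> J}"
      using ideal_add[OF J ab x(1)] by (intro CollectI exI[of _ "(a - b) + x"]) simp
  next
    fix y assume "y \<in> {b + x |x. x \<in> J}"
    then obtain x where x: "x \<in> J" "y = b + x" by auto
    then show "y \<in> {a + x |x. x \<in> J}"
      using ideal_diff[OF J x(1) ab] by (intro CollectI exI[of _ "x - (a - b)"]) simp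
  qed
qed

lemma coset_card:
  fixes J :: "'a::{comm_ring_1,finite} set"
  shows "card {a + x |x. x \<in> J} = card J"
proof -
  have "{a + x |x. x \<in> J} = (\<lambda>x. a + x) ` J" by auto
  then show ?thesis by (simp add: card_image inj_on_def)
qed

lemma card_cosets:
  fixes J :: "'a::{comm_ring_1,finite} set"
  assumes J: "ring_ideal J"
  shows "CARD('a) = card (quotient_cosets J) * card J"
proof -
  let ?co = "\<lambda>a. {a + x |x. x \<in> J}"
  have "CARD('a) = (\<Sum>C\<in>?co ` UNIV. card {a\<in>UNIV. ?co a = C})"
    by (rule card_fibers) simp
  also have "\<dots> = (\<Sum>C\<in>?co ` UNIV. card J)"
  proof (rule sum.cong[OF refl])
    fix C assume "C \<in> ?co ` UNIV"
    then obtain b where b: "C = ?co b" by auto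
    have "{a\<in>UNIV. ?co a = C} = ?co b"
    proof (intro set_eqI iffI)
      fix a assume "a \<in> {a\<in>UNIV. ?co a = C}"
      then have "a - b \<in> J" using coset_eq[OF J] b by auto
      then show "a \<in> ?co b" by (intro CollectI exI[of _ "a - b"]) simp
    next
      fix a assume "a \<in> ?co b"
      then obtain x where "x \<in> J" "a = b + x" by auto
      then show "a \<in> {a\<in>UNIV. ?co a = C}" using coset_eq[OF J, of a b] b by simp
    qed
    then show "card {a\<in>UNIV. ?co a = C} = card J" using coset_card by simp
  qed
  also have "\<dots> = card (quotient_cosets J) * card J"
    unfolding quotient_cosets_def by simp
  finally show ?thesis .
qed

lemma fiber_card:
  fixes c e0 :: "'a::{comm_ring_1,finite}"
  shows "card {x. x * c = e0 * c} = card {x. x * c = 0}"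
proof -
  have "{x. x * c = e0 * c} = (\<lambda>t. t + e0) ` {x. x * c = 0}"
  proof (intro set_eqI iffI)
    fix x assume "x \<in> {x. x * c = e0 * c}"
    then have "(x - e0) * c = 0" by (simp add: algebra_simps)
    then show "x \<in> (\<lambda>t. t + e0) ` {x. x * c = 0}" by (intro image_eqI[of _ _ "x - e0"]) auto
  next
    fix x assume "x \<in> (\<lambda>t. t + e0) ` {x. x * c = 0}"
    then show "x \<in> {x. x * c = e0 * c}" by (auto simp: algebra_simps)
  qed
  then show ?thesis by (simp add: card_image inj_on_def)
qed

locale fvr =
  fixes z :: "'a::{comm_ring_1,finite}"
  assumes fvr: "finite_valuation_ring TYPE('a)"
    and maxI: "maximal_ideal (principal_ideal z)"
begin

definition I :: "nat \<Rightarrow> 'a set" where "I k = principal_ideal (z ^ k)"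
definition Ann :: "nat \<Rightarrow> 'a set" where "Ann k = {d. d * z ^ k = 0}"
definition r :: nat where "r = (LEAST k. z ^ k = 0)"
definition q :: nat where "q = card (quotient_cosets (principal_ideal z))"

lemma unique_max: "maximal_ideal J \<Longrightarrow> J = principal_ideal z"
  using fvr maxI unfolding finite_valuation_ring_def by blast

lemma exists_max:
  assumes "ring_ideal J" "J \<noteq> (UNIV :: 'a set)"
  shows "\<exists>K. maximal_ideal K \<and> J \<subseteq> K"
proof -
  let ?S = "{K. ring_ideal K \<and> J \<subseteq> K \<and> K \<noteq> (UNIV::'a set)}"
  have fin: "finite ?S" by simp
  have ne: "J \<in> ?S" using assms by auto
  define m where "m = Max (card ` ?S)"
  have "m \<in> card ` ?S" unfolding m_def using fin ne by (intro Max_in) auto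
  then obtain K where K: "K \<in> ?S" "card K = m" by auto
  have Kmax: "card K' \<le> card K" if "K' \<in> ?S" for K'
  proof -
    have "card K' \<le> m" unfolding m_def by (rule Max_ge) (use fin that in auto)
    then show ?thesis using K(2) by simp
  qed
  have "maximal_ideal K"
    unfolding maximal_ideal_def
  proof (intro conjI allI impI)
    show "ring_ideal K" "K \<noteq> UNIV" using K by auto
    fix J' assume J': "ring_ideal J' \<and> K \<subseteq> J'"
    show "J' = K \<or> J' = UNIV"
    proof (cases "J' = UNIV")
      case False
      then have "J' \<in> ?S" using J' K by auto
      then have "card J' \<le> card K" by (rule Kmax)
      then have "K = J'" using J' by (intro card_seteq) auto
      then show ?thesis by simp
    qed simp
  qed
  then show ?thesis using K by blast
qed

lemma max_ideal: "ring_ideal (principal_ideal z)" "principal_ideal z \<noteq> UNIV"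
  using maxI unfolding maximal_ideal_def by auto

lemma one_notin: "1 \<notin> principal_ideal z"
proof
  assume "1 \<in> principal_ideal z"
  then have "\<forall>x. x * 1 \<in> principal_ideal z" using max_ideal(1) unfolding ring_ideal_def by blast
  then show False using max_ideal(2) by auto
qed

lemma unit:
  assumes "x \<notin> principal_ideal z"
  shows "\<exists>y. x * y = 1"
proof (cases "principal_ideal x = UNIV")
  case True
  then have "1 \<in> principal_ideal x" by simp
  then show ?thesis unfolding mem_principal by (auto simp: mult.commute)
next
  case False
  then obtain K where "maximal_ideal K" "principal_ideal x \<subseteq> K"
    using exists_max ideal_principal by blast
  then have "principal_ideal x \<subseteq> principal_ideal z" using unique_max by blast
  moreover have "x \<in> principal_ideal x" unfolding mem_principal by (intro exI[of _ 1]) simp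
  ultimately show ?thesis using assms by blast
qed

lemma z_in: "z ^ Suc k \<in> principal_ideal z"
  unfolding mem_principal by (intro exI[of _ "z ^ k"]) (simp add: mult.commute)

lemma nilp: "\<exists>k. z ^ k = 0"
proof -
  have "\<not> inj (\<lambda>k::nat. z ^ k)"
  proof
    assume "inj (\<lambda>k::nat. z ^ k)"
    then have "finite (UNIV :: nat set)" by (rule finite_imageD[rotated]) simp
    then show False by simp
  qed
  then obtain i j :: nat where ij: "z ^ i = z ^ j" "i \<noteq> j" unfolding inj_def by blast
  have "\<exists>i j. z ^ i = z ^ j \<and> i < j"
  proof (cases "i < j")
    case True then show ?thesis using ij by blast
  next
    case False then have "j < i" using ij(2) by simp
    then show ?thesis using ij(1) by (intro exI[of _ j] exI[of _ i]) simp
  qed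
  then obtain i j where ij: "z ^ i = z ^ j" "i < j" by blast
  define m where "m = j - i - 1"
  have j: "j = i + Suc m" using ij m_def by simp
  have "1 - z ^ Suc m \<notin> principal_ideal z"
  proof
    assume "1 - z ^ Suc m \<in> principal_ideal z"
    then have "(1 - z ^ Suc m) + z ^ Suc m \<in> principal_ideal z"
      using ideal_add[OF max_ideal(1)] z_in by blast
    then show False using one_notin by simp
  qed
  then obtain w where w: "(1 - z ^ Suc m) * w = 1" using unit by blast
  have "z ^ i * (1 - z ^ Suc m) = z ^ i - z ^ (i + Suc m)" by (simp add: right_diff_distrib power_add)
  also have "\<dots> = 0" using ij(1) j by simp
  finally have "z ^ i * (1 - z ^ Suc m) = 0" .
  then have "z ^ i * (1 - z ^ Suc m) * w = 0" by simp
  then have "z ^ i = 0" using w by (simp add: mult.assoc)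
  then show ?thesis by blast
qed

lemma zr: "z ^ r = 0"
  unfolding r_def using nilp by (rule LeastI_ex)

lemma zlt: "k < r \<Longrightarrow> z ^ k \<noteq> 0"
  unfolding r_def by (rule not_less_Least)

lemma r_pos: "r \<ge> 1"
  using zr by (cases r) auto

lemma zge: "r \<le> k \<Longrightarrow> z ^ k = 0"
  using zr by (metis le_add_diff_inverse mult_zero_left power_add mult.commute)

lemma mem_I: "x \<in> I k \<longleftrightarrow> (\<exists>t. x = t * z ^ k)"
  unfolding I_def mem_principal ..

lemma I_ideal: "ring_ideal (I k)"
  unfolding I_def by (rule ideal_principal)

lemma I_mono: "k \<le> k' \<Longrightarrow> I k' \<subseteq> I k"
proof
  fix x assume "k \<le> k'" "x \<in> I k'"
  then obtain t where "x = t * z ^ k'" unfolding mem_I by blast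
  have "z ^ k' = z ^ (k' - k) * z ^ k" using \<open>k \<le> k'\<close>
    by (metis le_add_diff_inverse2 power_add)
  then have "x = (t * z ^ (k' - k)) * z ^ k" using \<open>x = t * z ^ k'\<close>
    by (simp only: mult.assoc)
  then show "x \<in> I k" unfolding mem_I by blast
qed

lemma I0: "I 0 = UNIV"
proof -
  have "x \<in> I 0" for x unfolding mem_I by (rule exI[of _ x]) simp
  then show ?thesis by auto
qed

lemma I1: "I 1 = principal_ideal z" unfolding I_def power_one_right ..

lemma Ir: "r \<le> k \<Longrightarrow> I k = {0}"
proof -
  assume "r \<le> k"
  then have zk: "z ^ k = 0" by (rule zge)
  have "x \<in> I k \<longleftrightarrow> x = 0" for x unfolding mem_I zk by simp
  then show ?thesis by auto
qed

lemma Ann_sub: "k < r \<Longrightarrow> Ann k \<subseteq> I 1"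
proof
  fix d assume k: "k < r" and d: "d \<in> Ann k"
  show "d \<in> I 1"
  proof (rule ccontr)
    assume "d \<notin> I 1"
    then obtain e where e: "d * e = 1" using unit I1 by auto
    have "z ^ k = (d * e) * z ^ k" using e by simp
    also have "\<dots> = e * (d * z ^ k)" by (simp add: algebra_simps)
    also have "\<dots> = 0" using d unfolding Ann_def by simp
    finally show False using zlt[OF k] by simp
  qed
qed

lemma Ann_pos: "card (Ann k) > 0"
proof -
  have "0 \<in> Ann k" unfolding Ann_def by simp
  then show ?thesis by (auto simp: card_gt_0_iff)
qed

lemma card_I_Ann: "CARD('a) = card (Ann k) * card (I k)"
proof -
  let ?f = "\<lambda>x. x * z ^ k"
  have img: "?f ` UNIV = I k"
  proof (intro set_eqI iffI)
    fix y assume "y \<in> ?f ` UNIV" then show "y \<in> I k" unfolding mem_I by auto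
  next
    fix y assume "y \<in> I k" then obtain t where "y = t * z ^ k" unfolding mem_I by blast
    then show "y \<in> ?f ` UNIV" by auto
  qed
  have "CARD('a) = (\<Sum>y\<in>?f ` UNIV. card {x\<in>UNIV. ?f x = y})"
    by (rule card_fibers) simp
  also have "\<dots> = (\<Sum>y\<in>I k. card (Ann k))"
    unfolding img
  proof (rule sum.cong[OF refl])
    fix y assume "y \<in> I k"
    then obtain t where "y = t * z ^ k" unfolding mem_I by blast
    then show "card {x\<in>UNIV. ?f x = y} = card (Ann k)"
      unfolding Ann_def using fiber_card[of "z ^ k" t] by simp
  qed
  finally show ?thesis by simp
qed

lemma card_I1: 
  assumes k: "k < r"
  shows "card (I 1) = card (Ann k) * card (I (Suc k))"
proof -
  let ?f = "\<lambda>x. x * z ^ k"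
  have img: "?f ` I 1 = I (Suc k)"
  proof (intro set_eqI iffI)
    fix y assume "y \<in> ?f ` I 1"
    then obtain x where "x \<in> I 1" "y = x * z ^ k" by auto
    then obtain t where "y = t * z * z ^ k" unfolding mem_I by auto
    then show "y \<in> I (Suc k)" unfolding mem_I by (auto simp: mult.assoc)
  next
    fix y assume "y \<in> I (Suc k)"
    then obtain t where "y = t * z ^ Suc k" unfolding mem_I by auto
    then have "y = ?f (t * z)" by (simp add: mult.assoc)
    moreover have "t * z \<in> I 1" unfolding mem_I by auto
    ultimately show "y \<in> ?f ` I 1" by blast
  qed
  have "card (I 1) = (\<Sum>y\<in>?f ` I 1. card {x\<in>I 1. ?f x = y})"
    by (rule card_fibers) simp
  also have "\<dots> = (\<Sum>y\<in>I (Suc k). card (Ann k))"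
    unfolding img
  proof (rule sum.cong[OF refl])
    fix y assume "y \<in> I (Suc k)"
    then obtain t where t: "y = t * z ^ Suc k" unfolding mem_I by blast
    have eq: "{x\<in>I 1. ?f x = y} = {x. x * z ^ k = (t * z) * z ^ k}"
    proof (intro set_eqI iffI)
      fix x assume "x \<in> {x. x * z ^ k = (t * z) * z ^ k}"
      then have "(x - t * z) * z ^ k = 0" by (simp add: algebra_simps)
      then have "x - t * z \<in> I 1" using Ann_sub[OF k] unfolding Ann_def by auto
      moreover have "t * z \<in> I 1" unfolding mem_I by auto
      ultimately have "(x - t * z) + t * z \<in> I 1" by (rule ideal_add[OF I_ideal])
      then show "x \<in> {x\<in>I 1. ?f x = y}" using \<open>x \<in> {x. x * z ^ k = (t * z) * z ^ k}\<close> t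
        by (simp add: mult.assoc)
    qed (use t in \<open>auto simp: mult.assoc\<close>)
    show "card {x\<in>I 1. ?f x = y} = card (Ann k)"
      unfolding eq Ann_def by (rule fiber_card)
  qed
  finally show ?thesis by simp
qed

lemma card_univ_q: "CARD('a) = q * card (I 1)"
  unfolding q_def I1 using card_cosets[OF max_ideal(1)] .

lemma card_I_step: 
  assumes "k < r" shows "card (I k) = q * card (I (Suc k))"
proof -
  have "card (Ann k) * card (I k) = q * card (I 1)"
    using card_I_Ann[of k] card_univ_q by (rule trans[OF sym])
  also have "\<dots> = q * (card (Ann k) * card (I (Suc k)))" using card_I1[OF assms] by simp
  also have "\<dots> = card (Ann k) * (q * card (I (Suc k)))" by (simp only: ac_simps)
  finally have eq: "card (Ann k) * card (I k) = card (Ann k) * (q * card (I (Suc k)))" .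
  have "card (Ann k) \<noteq> 0" using Ann_pos[of k] by linarith
  then show ?thesis using eq by (metis mult_left_cancel)
qed

lemma card_I_pow: "m \<le> r \<Longrightarrow> card (I (r - m)) = q ^ m"
proof (induction m)
  case 0
  then show ?case using Ir[of r] by simp
next
  case (Suc m)
  have k: "r - Suc m < r" and e: "Suc (r - Suc m) = r - m" using Suc.prems by auto
  have ih: "card (I (r - m)) = q ^ m" using Suc.IH Suc.prems by simp
  have "card (I (r - Suc m)) = q * card (I (Suc (r - Suc m)))" by (rule card_I_step[OF k])
  also have "\<dots> = q * q ^ m" unfolding e ih ..
  finally show ?case by simp
qed

lemma card_R: "CARD('a) = q ^ r"
  using card_I_pow[of r] I0 by simp

lemma card_I1_pow: "card (I 1) = q ^ (r - 1)"
  using card_I_pow[of "r - 1"] r_pos by simp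

lemma val:
  "\<exists>j\<le>r. (\<forall>k\<le>r. \<beta> \<in> I k \<longleftrightarrow> k \<le> j) \<and>
     (\<forall>\<alpha>. card {d. d * \<beta> = \<alpha>} = (if \<alpha> \<in> I j then card (Ann j) else 0))"
proof -
  let ?P = "\<lambda>k. k \<le> r \<and> \<beta> \<in> I k"
  define j where "j = Greatest ?P"
  have P0: "?P 0" using I0 by simp
  have Pj: "?P j" unfolding j_def using GreatestI_nat[of ?P 0 r] P0 by blast
  have jge: "k \<le> j" if "?P k" for k unfolding j_def using Greatest_le_nat[of ?P k r] that by blast
  have iff: "\<forall>k\<le>r. \<beta> \<in> I k \<longleftrightarrow> k \<le> j"
    using jge Pj I_mono by blast
  obtain w where w: "\<beta> = w * z ^ j" using Pj unfolding mem_I by blast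
  have cnt: "card {d. d * \<beta> = \<alpha>} = (if \<alpha> \<in> I j then card (Ann j) else 0)" for \<alpha>
  proof (cases "j = r")
    case True
    then have b0: "\<beta> = 0" using w zr by simp
    show ?thesis using Ir[of r] True b0 unfolding Ann_def by (simp add: zr)
  next
    case False
    then have jr: "j < r" using Pj by simp
    have "\<beta> \<notin> I (Suc j)" using jge[of "Suc j"] jr by auto
    have "w \<notin> principal_ideal z"
    proof
      assume "w \<in> principal_ideal z"
      then obtain t where "w = t * z" unfolding mem_principal by blast
      then have "\<beta> = t * z ^ Suc j" using w by (simp only: power_Suc mult.assoc)
      then show False using \<open>\<beta> \<notin> I (Suc j)\<close> unfolding mem_I by blast
    qed
    then obtain w' where w': "w * w' = 1" using unit by blast
    have eq: "{d. d * \<beta> = \<alpha>} = (\<lambda>e. e * w') ` {e. e * z ^ j = \<alpha>}"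
    proof (intro set_eqI iffI)
      fix d assume "d \<in> {d. d * \<beta> = \<alpha>}"
      then have "(d * w) * z ^ j = \<alpha>" "d = (d * w) * w'" using w w'
        by (simp_all add: mult.assoc)
      then show "d \<in> (\<lambda>e. e * w') ` {e. e * z ^ j = \<alpha>}" by blast
    next
      fix d assume "d \<in> (\<lambda>e. e * w') ` {e. e * z ^ j = \<alpha>}"
      then obtain e where e: "e * z ^ j = \<alpha>" "d = e * w'" by auto
      have "d * \<beta> = e * (w * w') * z ^ j" unfolding e(2) w by (simp only: ac_simps)
      then show "d \<in> {d. d * \<beta> = \<alpha>}" using w' e(1) by simp
    qed
    have inj: "inj (\<lambda>e. e * w')"
    proof (rule injI)
      fix a b assume "a * w' = b * w'"
      then have "a * w' * w = b * w' * w" by simp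
      then show "a = b" using w' by (simp add: mult.assoc mult.commute[of w' w])
    qed
    have c1: "card {d. d * \<beta> = \<alpha>} = card {e. e * z ^ j = \<alpha>}"
      unfolding eq by (rule card_image) (rule inj_on_subset[OF inj], simp)
    show ?thesis
    proof (cases "\<alpha> \<in> I j")
      case True
      then obtain e0 where "\<alpha> = e0 * z ^ j" unfolding mem_I by blast
      then show ?thesis using c1 fiber_card[of "z ^ j" e0] True unfolding Ann_def by simp
    next
      case False
      then have "{e. e * z ^ j = \<alpha>} = {}" unfolding mem_I by auto
      then show ?thesis using c1 False by simp
    qed
  qed
  show ?thesis using Pj iff cnt by blast
qed

end


lemma sum_pair_UNIV:
  fixes h :: "'b::finite \<times> 'c::finite \<Rightarrow> 'd::comm_monoid_add"
  shows "(\<Sum>u\<in>UNIV. h u) = (\<Sum>a\<in>UNIV. \<Sum>b\<in>UNIV. h (a, b))"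
  by (simp add: sum.cartesian_product)

lemma sum_shift:
  fixes g :: "'a::{ab_group_add,finite} \<Rightarrow> 'd::comm_monoid_add"
  shows "(\<Sum>x\<in>UNIV. g (a - x)) = (\<Sum>x\<in>UNIV. g x)"
  by (rule sum.reindex_bij_witness[of _ "\<lambda>x. a - x" "\<lambda>x. a - x"]) auto

lemma card_as_sum:
  fixes P :: "'b::finite \<Rightarrow> bool"
  shows "real (card {x. P x}) = (\<Sum>x\<in>UNIV. if P x then 1 else 0)"
proof -
  have "real (card {x. P x}) = (\<Sum>x\<in>{x\<in>UNIV. P x}. 1)" by simp
  also have "\<dots> = (\<Sum>x\<in>UNIV. if P x then 1 else 0)" by (rule sum.inter_filter) simp
  finally show ?thesis .
qed

lemma quad_expand:
  fixes f :: "'a::{comm_ring_1,finite} \<times> 'a \<Rightarrow> real"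
  shows "(\<Sum>u\<in>UNIV. (\<Sum>d\<in>UNIV. f (snd u * d - fst u, d))^2) =
    (\<Sum>w\<in>UNIV. \<Sum>w'\<in>UNIV. f w * f w' * real (card {x. x * (snd w' - snd w) = fst w' - fst w}))"
proof -
  define G where "G x c d d' = f (c, d) * f (c + x * (d' - d), d')" for x c d d'
  have "(\<Sum>u\<in>UNIV. (\<Sum>d\<in>UNIV. f (snd u * d - fst u, d))^2) =
     (\<Sum>u1\<in>UNIV. \<Sum>u2\<in>UNIV. \<Sum>d\<in>UNIV. \<Sum>d'\<in>UNIV. f (u2 * d - u1, d) * f (u2 * d' - u1, d'))"
    by (subst sum_pair_UNIV) (simp add: power2_eq_square sum_product)
  also have "\<dots> = (\<Sum>u2\<in>UNIV. \<Sum>u1\<in>UNIV. \<Sum>d\<in>UNIV. \<Sum>d'\<in>UNIV. f (u2 * d - u1, d) * f (u2 * d' - u1, d'))"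
    by (rule sum.swap)
  also have "\<dots> = (\<Sum>u2\<in>UNIV. \<Sum>d\<in>UNIV. \<Sum>u1\<in>UNIV. \<Sum>d'\<in>UNIV. f (u2 * d - u1, d) * f (u2 * d' - u1, d'))"
    by (rule sum.cong[OF refl], rule sum.swap)
  also have "\<dots> = (\<Sum>u2\<in>UNIV. \<Sum>d\<in>UNIV. \<Sum>c\<in>UNIV. \<Sum>d'\<in>UNIV. G u2 c d d')"
  proof (rule sum.cong[OF refl], rule sum.cong[OF refl])
    fix u2 d :: 'a
    have "(\<Sum>u1\<in>UNIV. \<Sum>d'\<in>UNIV. f (u2 * d - u1, d) * f (u2 * d' - u1, d')) =
          (\<Sum>u1\<in>UNIV. (\<lambda>c. \<Sum>d'\<in>UNIV. G u2 c d d') (u2 * d - u1))"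
      unfolding G_def by (intro sum.cong[OF refl]) (simp add: algebra_simps)
    also have "\<dots> = (\<Sum>c\<in>UNIV. \<Sum>d'\<in>UNIV. G u2 c d d')"
      by (rule sum_shift)
    finally show "(\<Sum>u1\<in>UNIV. \<Sum>d'\<in>UNIV. f (u2 * d - u1, d) * f (u2 * d' - u1, d')) =
          (\<Sum>c\<in>UNIV. \<Sum>d'\<in>UNIV. G u2 c d d')" .
  qed
  also have "\<dots> = (\<Sum>u2\<in>UNIV. \<Sum>c\<in>UNIV. \<Sum>d\<in>UNIV. \<Sum>d'\<in>UNIV. G u2 c d d')"
    by (rule sum.cong[OF refl], rule sum.swap)
  finally have L: "(\<Sum>u\<in>UNIV. (\<Sum>d\<in>UNIV. f (snd u * d - fst u, d))^2) =
      (\<Sum>x\<in>UNIV. \<Sum>c\<in>UNIV. \<Sum>d\<in>UNIV. \<Sum>d'\<in>UNIV. G x c d d')" .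
  define H where "H w w' x = f w * f w' * (if x * (snd w' - snd w) = fst w' - fst w then 1 else 0)"
    for w w' :: "'a \<times> 'a" and x
  have "(\<Sum>w\<in>UNIV. \<Sum>w'\<in>UNIV. f w * f w' * real (card {x. x * (snd w' - snd w) = fst w' - fst w}))
      = (\<Sum>w\<in>UNIV. \<Sum>w'\<in>UNIV. \<Sum>x\<in>UNIV. H w w' x)"
    unfolding H_def card_as_sum by (simp add: sum_distrib_left)
  also have "\<dots> = (\<Sum>w\<in>UNIV. \<Sum>x\<in>UNIV. \<Sum>w'\<in>UNIV. H w w' x)"
    by (rule sum.cong[OF refl], rule sum.swap)
  also have "\<dots> = (\<Sum>x\<in>UNIV. \<Sum>w\<in>UNIV. \<Sum>w'\<in>UNIV. H w w' x)"
    by (rule sum.swap)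
  also have "\<dots> = (\<Sum>x\<in>UNIV. \<Sum>c\<in>UNIV. \<Sum>d\<in>UNIV. \<Sum>d'\<in>UNIV. G x c d d')"
  proof (rule sum.cong[OF refl])
    fix x :: 'a
    have "(\<Sum>w\<in>UNIV. \<Sum>w'\<in>UNIV. H w w' x) = (\<Sum>c\<in>UNIV. \<Sum>d\<in>UNIV. \<Sum>w'\<in>UNIV. H (c, d) w' x)"
      by (rule sum_pair_UNIV)
    also have "\<dots> = (\<Sum>c\<in>UNIV. \<Sum>d\<in>UNIV. \<Sum>d'\<in>UNIV. G x c d d')"
    proof (rule sum.cong[OF refl], rule sum.cong[OF refl])
      fix c d :: 'a
      have "(\<Sum>w'\<in>UNIV. H (c, d) w' x) = (\<Sum>c'\<in>UNIV. \<Sum>d'\<in>UNIV. H (c, d) (c', d') x)"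
        by (rule sum_pair_UNIV)
      also have "\<dots> = (\<Sum>d'\<in>UNIV. \<Sum>c'\<in>UNIV. H (c, d) (c', d') x)"
        by (rule sum.swap)
      also have "\<dots> = (\<Sum>d'\<in>UNIV. G x c d d')"
      proof (rule sum.cong[OF refl])
        fix d' :: 'a
        have "(\<Sum>c'\<in>UNIV. H (c, d) (c', d') x) =
              (\<Sum>c'\<in>UNIV. if c' = c + x * (d' - d) then f (c, d) * f (c', d') else 0)"
          unfolding H_def by (intro sum.cong[OF refl]) (auto simp: algebra_simps)
        also have "\<dots> = G x c d d'" unfolding G_def by simp
        finally show "(\<Sum>c'\<in>UNIV. H (c, d) (c', d') x) = G x c d d'" .
      qed
      finally show "(\<Sum>w'\<in>UNIV. H (c, d) w' x) = (\<Sum>d'\<in>UNIV. G x c d d')" .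
    qed
    finally show "(\<Sum>w\<in>UNIV. \<Sum>w'\<in>UNIV. H w w' x) = (\<Sum>c\<in>UNIV. \<Sum>d\<in>UNIV. \<Sum>d'\<in>UNIV. G x c d d')" .
  qed
  finally show ?thesis using L by simp
qed

lemma psd_key:
  fixes f :: "'b::finite \<Rightarrow> real" and h :: "'b \<Rightarrow> 'c"
  shows "0 \<le> (\<Sum>w\<in>UNIV. \<Sum>w'\<in>UNIV. f w * f w' * (if h w' = h w then 1 else 0))"
proof -
  define G where "G \<kappa> = (\<Sum>w'\<in>{w'\<in>UNIV. h w' = \<kappa>}. f w')" for \<kappa>
  have "(\<Sum>w\<in>UNIV. \<Sum>w'\<in>UNIV. f w * f w' * (if h w' = h w then 1 else 0)) =
        (\<Sum>w\<in>UNIV. f w * G (h w))"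
  proof (intro sum.cong[OF refl])
    fix w
    have "(\<Sum>w'\<in>UNIV. f w * f w' * (if h w' = h w then 1 else 0)) =
          f w * (\<Sum>w'\<in>UNIV. if h w' = h w then f w' else 0)"
      by (simp add: sum_distrib_left if_distrib cong: if_cong)
    also have "\<dots> = f w * G (h w)" unfolding G_def by (subst sum.inter_filter) simp_all
    finally show "(\<Sum>w'\<in>UNIV. f w * f w' * (if h w' = h w then 1 else 0)) = f w * G (h w)" .
  qed
  also have "\<dots> = (\<Sum>\<kappa>\<in>h ` UNIV. \<Sum>w\<in>{w\<in>UNIV. h w = \<kappa>}. f w * G (h w))"
    by (rule sum.image_gen) simp
  also have "\<dots> = (\<Sum>\<kappa>\<in>h ` UNIV. G \<kappa> * G \<kappa>)"
  proof (intro sum.cong[OF refl])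
    fix \<kappa>
    have "(\<Sum>w\<in>{w\<in>UNIV. h w = \<kappa>}. f w * G (h w)) = (\<Sum>w\<in>{w\<in>UNIV. h w = \<kappa>}. f w * G \<kappa>)"
      by (rule sum.cong) auto
    also have "\<dots> = G \<kappa> * G \<kappa>" unfolding G_def by (simp add: sum_distrib_right)
    finally show "(\<Sum>w\<in>{w\<in>UNIV. h w = \<kappa>}. f w * G (h w)) = G \<kappa> * G \<kappa>" .
  qed
  also have "\<dots> \<ge> 0" by (intro sum_nonneg) simp
  finally show ?thesis by simp
qed

lemma amgm:
  fixes f :: "'b::finite \<Rightarrow> real" and E :: "'b \<Rightarrow> 'b \<Rightarrow> bool"
  assumes sym: "\<And>w w'. E w w' = E w' w"
    and bnd: "\<And>w. real (card {w'. E w w'}) \<le> N"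
  shows "(\<Sum>w\<in>UNIV. \<Sum>w'\<in>UNIV. f w * f w' * (if E w w' then 1 else 0)) \<le> N * (\<Sum>w\<in>UNIV. (f w)^2)"
proof -
  define A where "A = (\<Sum>w\<in>UNIV. \<Sum>w'\<in>UNIV. (f w)^2 * (if E w w' then 1 else 0))"
  define B where "B = (\<Sum>w\<in>UNIV. \<Sum>w'\<in>UNIV. (f w')^2 * (if E w w' then 1 else 0))"
  have "(\<Sum>w\<in>UNIV. \<Sum>w'\<in>UNIV. f w * f w' * (if E w w' then 1 else 0)) \<le>
        (\<Sum>w\<in>UNIV. \<Sum>w'\<in>UNIV. ((f w)^2 / 2 + (f w')^2 / 2) * (if E w w' then 1 else 0))"
  proof (intro sum_mono)
    fix w w'
    have "f w * f w' \<le> (f w)^2 / 2 + (f w')^2 / 2"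
      using sum_squares_bound[of "f w" "f w'"] by (simp add: power2_eq_square)
    then show "f w * f w' * (if E w w' then 1 else 0) \<le> ((f w)^2 / 2 + (f w')^2 / 2) * (if E w w' then 1 else 0)"
      by simp
  qed
  also have "\<dots> = A / 2 + B / 2"
    unfolding A_def B_def by (simp add: sum_divide_distrib sum.distrib algebra_simps)
  also have "B = A"
  proof -
    have "B = (\<Sum>w'\<in>UNIV. \<Sum>w\<in>UNIV. (f w')^2 * (if E w w' then 1 else 0))"
      unfolding B_def by (rule sum.swap)
    also have "\<dots> = A" unfolding A_def using sym by simp
    finally show ?thesis .
  qed
  also have "A / 2 + A / 2 = A" by simp
  also have "A = (\<Sum>w\<in>UNIV. (f w)^2 * real (card {w'. E w w'}))"
    unfolding A_def card_as_sum by (simp add: sum_distrib_left if_distrib cong: if_cong)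
  also have "\<dots> \<le> (\<Sum>w\<in>UNIV. (f w)^2 * N)"
    by (intro sum_mono mult_left_mono bnd) simp
  also have "\<dots> = N * (\<Sum>w\<in>UNIV. (f w)^2)" by (simp add: sum_distrib_left mult.commute)
  finally show ?thesis .
qed



lemma swap_k:
  fixes f :: "'b::finite \<Rightarrow> real"
  shows "(\<Sum>w\<in>UNIV. \<Sum>w'\<in>UNIV. f w * f w' * (\<Sum>k\<in>K. a k * g k w w')) =
         (\<Sum>k\<in>K. a k * (\<Sum>w\<in>UNIV. \<Sum>w'\<in>UNIV. f w * f w' * g k w w'))"
proof -
  have "(\<Sum>w\<in>UNIV. \<Sum>w'\<in>UNIV. f w * f w' * (\<Sum>k\<in>K. a k * g k w w')) =
        (\<Sum>w\<in>UNIV. \<Sum>w'\<in>UNIV. \<Sum>k\<in>K. a k * (f w * f w' * g k w w'))"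
    by (simp add: sum_distrib_left ac_simps)
  also have "\<dots> = (\<Sum>w\<in>UNIV. \<Sum>k\<in>K. \<Sum>w'\<in>UNIV. a k * (f w * f w' * g k w w'))"
    by (rule sum.cong[OF refl], rule sum.swap)
  also have "\<dots> = (\<Sum>k\<in>K. \<Sum>w\<in>UNIV. \<Sum>w'\<in>UNIV. a k * (f w * f w' * g k w w'))"
    by (rule sum.swap)
  also have "\<dots> = (\<Sum>k\<in>K. a k * (\<Sum>w\<in>UNIV. \<Sum>w'\<in>UNIV. f w * f w' * g k w w'))"
    by (simp add: sum_distrib_left)
  finally show ?thesis .
qed

context fvr
begin

definition A :: "nat \<Rightarrow> real" where "A k = real (card (Ann k))"

lemma cnt_id:
  "real (card {x. x * \<beta> = \<alpha>}) =
     (\<Sum>k\<in>{..r}. A k * (if \<alpha> \<in> I k \<and> \<beta> \<in> I k then 1 else 0))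
   - (\<Sum>k\<in>{..<r}. A k * (if \<alpha> \<in> I k \<and> \<beta> \<in> I (Suc k) then 1 else 0))"
proof -
  obtain j where j: "j \<le> r" "\<forall>k\<le>r. \<beta> \<in> I k \<longleftrightarrow> k \<le> j"
     "\<forall>\<alpha>. card {d. d * \<beta> = \<alpha>} = (if \<alpha> \<in> I j then card (Ann j) else 0)"
    using val by blast
  define g where "g k = A k * (if \<alpha> \<in> I k then 1 else 0)" for k
  have s1: "(\<Sum>k\<in>{..r}. A k * (if \<alpha> \<in> I k \<and> \<beta> \<in> I k then 1 else 0)) =
            (\<Sum>k\<in>{..r}. if k \<le> j then g k else 0)"
    by (rule sum.cong[OF refl]) (use j(2) in \<open>auto simp: g_def\<close>)
  have s2: "(\<Sum>k\<in>{..<r}. A k * (if \<alpha> \<in> I k \<and> \<beta> \<in> I (Suc k) then 1 else 0)) =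
            (\<Sum>k\<in>{..<r}. if Suc k \<le> j then g k else 0)"
  proof (rule sum.cong[OF refl])
    fix k assume "k \<in> {..<r}"
    then have "Suc k \<le> r" by simp
    then show "A k * (if \<alpha> \<in> I k \<and> \<beta> \<in> I (Suc k) then 1 else 0) = (if Suc k \<le> j then g k else 0)"
      using j(2) by (auto simp: g_def)
  qed
  have e1: "(\<Sum>k\<in>{..r}. if k \<le> j then g k else 0) = (\<Sum>k\<in>{..j}. g k)"
  proof -
    have "(\<Sum>k\<in>{..r}. if k \<le> j then g k else 0) = (\<Sum>k\<in>{k\<in>{..r}. k \<le> j}. g k)"
      by (rule sum.inter_filter[symmetric]) simp
    also have "{k\<in>{..r}. k \<le> j} = {..j}" using j(1) by auto
    finally show ?thesis .
  qed
  have e2: "(\<Sum>k\<in>{..<r}. if Suc k \<le> j then g k else 0) = (\<Sum>k\<in>{..<j}. g k)"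
  proof -
    have "(\<Sum>k\<in>{..<r}. if Suc k \<le> j then g k else 0) = (\<Sum>k\<in>{k\<in>{..<r}. Suc k \<le> j}. g k)"
      by (rule sum.inter_filter[symmetric]) simp
    also have "{k\<in>{..<r}. Suc k \<le> j} = {..<j}" using j(1) by auto
    finally show ?thesis .
  qed
  have e3: "(\<Sum>k\<in>{..j}. g k) - (\<Sum>k\<in>{..<j}. g k) = g j"
    by (simp add: lessThan_Suc_atMost[symmetric])
  have "real (card {x. x * \<beta> = \<alpha>}) = g j"
    using j(3) unfolding g_def A_def by simp
  then show ?thesis unfolding s1 s2 e1 e2 e3 .
qed

lemma I_neg_iff: "a - b \<in> I k \<longleftrightarrow> b - a \<in> I k"
  using ideal_neg[OF I_ideal] by (metis minus_diff_eq)

lemma KB: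
  fixes f :: "'a \<times> 'a \<Rightarrow> real"
  assumes sum0: "(\<Sum>w\<in>UNIV. f w) = 0"
  shows "(\<Sum>u\<in>UNIV. (\<Sum>d\<in>UNIV. f (snd u * d - fst u, d))^2)
      \<le> real r * real CARD('a) * real (card (I 1)) * (\<Sum>w\<in>UNIV. (f w)^2)"
proof -
  define E where "E k w w' = (fst w' - fst w \<in> I k \<and> snd w' - snd w \<in> I k)" for k and w w' :: "'a \<times> 'a"
  define F where "F k w w' = (fst w' - fst w \<in> I k \<and> snd w' - snd w \<in> I (Suc k))" for k and w w' :: "'a \<times> 'a"
  define S where "S k = (\<Sum>w\<in>UNIV. \<Sum>w'\<in>UNIV. f w * f w' * (if E k w w' then 1 else 0))" for k
  define T where "T k = (\<Sum>w\<in>UNIV. \<Sum>w'\<in>UNIV. f w * f w' * (if F k w w' then 1 else 0))" for k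
  define nf where "nf = (\<Sum>w\<in>UNIV. (f w)^2)"
  have A_nn: "A k \<ge> 0" for k unfolding A_def by simp
  have "(\<Sum>u\<in>UNIV. (\<Sum>d\<in>UNIV. f (snd u * d - fst u, d))^2) =
    (\<Sum>w\<in>UNIV. \<Sum>w'\<in>UNIV. f w * f w' * real (card {x. x * (snd w' - snd w) = fst w' - fst w}))"
    by (rule quad_expand)
  also have "\<dots> = (\<Sum>w\<in>UNIV. \<Sum>w'\<in>UNIV. f w * f w' * (\<Sum>k\<in>{..r}. A k * (if E k w w' then 1 else 0)))
      - (\<Sum>w\<in>UNIV. \<Sum>w'\<in>UNIV. f w * f w' * (\<Sum>k\<in>{..<r}. A k * (if F k w w' then 1 else 0)))"
    unfolding cnt_id E_def F_def by (simp add: right_diff_distrib sum_subtractf)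
  also have "\<dots> = (\<Sum>k\<in>{..r}. A k * S k) - (\<Sum>k\<in>{..<r}. A k * T k)"
    unfolding S_def T_def swap_k ..
  also have "\<dots> \<le> (\<Sum>k\<in>{..r}. A k * S k)"
  proof -
    have "T k \<ge> 0" for k
    proof -
      define key where "key w = ({fst w + x |x. x \<in> I k}, {snd w + x |x. x \<in> I (Suc k)})" for w :: "'a \<times> 'a"
      have "F k w w' = (key w' = key w)" for w w'
        unfolding F_def key_def using coset_eq[OF I_ideal] by simp
      then have "T k = (\<Sum>w\<in>UNIV. \<Sum>w'\<in>UNIV. f w * f w' * (if key w' = key w then 1 else 0))"
        unfolding T_def by simp
      then show ?thesis using psd_key by simp
    qed
    then have "(\<Sum>k\<in>{..<r}. A k * T k) \<ge> 0" by (intro sum_nonneg mult_nonneg_nonneg A_nn)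
    then show ?thesis by simp
  qed
  also have "(\<Sum>k\<in>{..r}. A k * S k) = (\<Sum>k\<in>{1..r}. A k * S k)"
  proof -
    have S0: "S 0 = 0"
    proof -
      have "S 0 = (\<Sum>w\<in>UNIV. \<Sum>w'\<in>UNIV. f w * f w')" unfolding S_def E_def I0 by simp
      also have "\<dots> = (\<Sum>w\<in>UNIV. f w) * (\<Sum>w\<in>UNIV. f w)" by (simp add: sum_product)
      finally show ?thesis using sum0 by simp
    qed
    have "{..r} = insert 0 {1..r}" by auto
    then show ?thesis using S0 by simp
  qed
  also have "\<dots> \<le> (\<Sum>k\<in>{1..r}. real CARD('a) * real (card (I 1)) * nf)"
  proof (rule sum_mono)
    fix k assume k: "k \<in> {1..r}"
    have bnd: "real (card {w'. E k w w'}) \<le> real (card (I k))^2" for w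
    proof -
      have "{w'. E k w w'} \<subseteq> (\<lambda>p. (fst w + fst p, snd w + snd p)) ` (I k \<times> I k)"
      proof
        fix w' assume "w' \<in> {w'. E k w w'}"
        then have "(fst w' - fst w, snd w' - snd w) \<in> I k \<times> I k" unfolding E_def by simp
        then show "w' \<in> (\<lambda>p. (fst w + fst p, snd w + snd p)) ` (I k \<times> I k)"
          by (intro image_eqI[of _ _ "(fst w' - fst w, snd w' - snd w)"]) auto
      qed
      then have "card {w'. E k w w'} \<le> card ((\<lambda>p. (fst w + fst p, snd w + snd p)) ` (I k \<times> I k))"
        by (intro card_mono) auto
      also have "\<dots> \<le> card (I k \<times> I k)" by (rule card_image_le) simp
      also have "\<dots> = card (I k)^2" by (simp add: card_cartesian_product power2_eq_square)
      finally show ?thesis by (simp flip: of_nat_power)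
    qed
    have Sk: "S k \<le> real (card (I k))^2 * nf"
      unfolding S_def nf_def
      by (rule amgm) (use bnd I_neg_iff in \<open>auto simp: E_def\<close>)
    have "A k * real (card (I k)) = real CARD('a)"
      unfolding A_def using card_I_Ann[of k] by simp
    moreover have "card (I k) \<le> card (I 1)" using k I_mono[of 1 k] by (intro card_mono) auto
    moreover have "nf \<ge> 0" unfolding nf_def by (intro sum_nonneg) simp
    ultimately have "A k * (real (card (I k))^2 * nf) \<le> real CARD('a) * real (card (I 1)) * nf"
      by (simp add: power2_eq_square mult.assoc[symmetric] mult_right_mono)
    then show "A k * S k \<le> real CARD('a) * real (card (I 1)) * nf"
      using Sk A_nn[of k] by (meson mult_left_mono order_trans)
  qed
  also have "\<dots> = real r * real CARD('a) * real (card (I 1)) * nf" by simp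
  finally show ?thesis unfolding nf_def .
qed

end


lemma poly_det: "poly (det A) x = det (\<chi> i j. poly (A $ i $ j) x)"
  unfolding det_def by (simp add: poly_sum poly_prod)

lemma sum_pCons_const: "(\<Sum>j\<in>S. [:g j:]) = [:\<Sum>j\<in>S. g j:]"
  by (induction S rule: infinite_finite_induct) simp_all

lemma det_row_sum_all:
  fixes A :: "'x::comm_ring_1^'n^'n"
  shows "det (\<chi> i. if i = k then (\<Sum>j\<in>UNIV. row j A) else row i A) = det A"
proof -
  have "det (\<chi> i. if i = k then (\<Sum>j\<in>UNIV. row j A) else row i A) =
        (\<Sum>j\<in>UNIV. det (\<chi> i. if i = k then row j A else row i A))"
    by (rule det_linear_row_sum) simp
  also have "\<dots> = (\<Sum>j\<in>UNIV. if j = k then det A else 0)"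
  proof (rule sum.cong[OF refl])
    fix j
    show "det (\<chi> i. if i = k then row j A else row i A) = (if j = k then det A else 0)"
    proof (cases "j = k")
      case True
      have "(\<chi> i. if i = k then row j A else row i A) = A"
        using True by (simp add: vec_eq_iff row_def)
      then show ?thesis using True by simp
    next
      case False
      have "det (\<chi> i. if i = k then row j A else row i A) = 0"
        by (rule det_identical_rows[of k j]) (use False in \<open>simp_all add: row_def vec_eq_iff\<close>)
      then show ?thesis using False by simp
    qed
  qed
  also have "\<dots> = det A" by simp
  finally show ?thesis .
qed

lemma det_zero_if_ker:
  fixes A :: "real^'n^'n"
  assumes "y \<noteq> 0" "A *v y = 0"
  shows "det A = 0"
proof (rule ccontr)
  assume "det A \<noteq> 0"
  then have "invertible A" by (simp add: invertible_det_nz)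
  then have "\<exists>B. B ** A = mat 1" by (simp add: invertible_left_inverse)
  then show False using assms matrix_left_invertible_ker by blast
qed

lemma ker_if_det_zero:
  fixes A :: "real^'n^'n"
  assumes "det A = 0"
  shows "\<exists>y. y \<noteq> 0 \<and> A *v y = 0"
proof -
  have "\<not> invertible A" using assms by (simp add: invertible_det_nz)
  then have "\<not> (\<exists>B. B ** A = mat 1)" by (simp add: invertible_left_inverse)
  then show ?thesis using matrix_left_invertible_ker by blast
qed

abbreviation SPM :: "real ^ ('a::{comm_ring_1,finite} \<times> 'a) ^ ('a \<times> 'a)" where
  "SPM \<equiv> sum_product_matrix"

lemma M_entry: "(SPM :: real ^ ('a::{comm_ring_1,finite} \<times> 'a) ^ ('a \<times> 'a)) $ v $ w =
    (if fst v + fst w = snd v * snd w then 1 else 0)"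
  by (simp add: sum_product_matrix_def sum_product_adj_def)

lemma M_sym: "(SPM :: real ^ ('a::{comm_ring_1,finite} \<times> 'a) ^ ('a \<times> 'a)) $ v $ w = SPM $ w $ v"
  unfolding M_entry by (simp add: add.commute mult.commute)

lemma M_row_sum: "(\<Sum>w\<in>UNIV. (SPM :: real ^ ('a::{comm_ring_1,finite} \<times> 'a) ^ ('a \<times> 'a)) $ v $ w) = real CARD('a)"
proof -
  have "(\<Sum>w\<in>UNIV. (SPM :: real ^ ('a \<times> 'a) ^ ('a \<times> 'a)) $ v $ w) =
        (\<Sum>c\<in>UNIV. \<Sum>d\<in>UNIV. if fst v + c = snd v * d then 1 else 0)"
    unfolding M_entry by (subst sum_pair_UNIV) simp
  also have "\<dots> = (\<Sum>d\<in>UNIV. \<Sum>c\<in>UNIV. if c = snd v * d - fst v then 1 else 0)"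
    by (subst sum.swap) (simp add: eq_diff_eq add.commute)
  also have "\<dots> = real CARD('a)" by simp
  finally show ?thesis .
qed

lemma Mv: "((SPM :: real ^ ('a::{comm_ring_1,finite} \<times> 'a) ^ ('a \<times> 'a)) *v y) $ u =
   (\<Sum>d\<in>UNIV. y $ (snd u * d - fst u, d))"
proof -
  have "(SPM *v y) $ u = (\<Sum>c\<in>UNIV. \<Sum>d\<in>UNIV. (if fst u + c = snd u * d then 1 else 0) * y $ (c, d))"
    unfolding matrix_vector_mult_def M_entry by (subst sum_pair_UNIV) simp
  also have "\<dots> = (\<Sum>d\<in>UNIV. \<Sum>c\<in>UNIV. if c = snd u * d - fst u then y $ (c, d) else 0)"
  proof -
    have e: "(fst u + c = snd u * d) = (c = snd u * d - fst u)" for c d by (auto simp: algebra_simps)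
    show ?thesis by (subst sum.swap) (simp only: e if_distrib[of "\<lambda>t. t * _"] mult_1 mult_zero_left)
  qed
  also have "\<dots> = (\<Sum>d\<in>UNIV. y $ (snd u * d - fst u, d))" by simp
  finally show ?thesis .
qed

lemma Mv_sum: "(\<Sum>u\<in>UNIV. ((SPM :: real ^ ('a::{comm_ring_1,finite} \<times> 'a) ^ ('a \<times> 'a)) *v y) $ u) =
   real CARD('a) * (\<Sum>w\<in>UNIV. y $ w)"
proof -
  have "(\<Sum>u\<in>UNIV. (SPM *v y) $ u) = (\<Sum>u\<in>UNIV. \<Sum>w\<in>UNIV. SPM $ u $ w * y $ w)"
    unfolding matrix_vector_mult_def by simp
  also have "\<dots> = (\<Sum>w\<in>UNIV. \<Sum>u\<in>UNIV. SPM $ w $ u * y $ w)"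
    by (subst sum.swap) (simp add: M_sym)
  also have "\<dots> = (\<Sum>w\<in>UNIV. real CARD('a) * y $ w)"
    by (simp add: sum_distrib_right[symmetric] M_row_sum)
  also have "\<dots> = real CARD('a) * (\<Sum>w\<in>UNIV. y $ w)" by (simp add: sum_distrib_left)
  finally show ?thesis .
qed

definition XP :: "real poly ^ ('a::{comm_ring_1,finite} \<times> 'a) ^ ('a \<times> 'a)" where
  "XP = (\<chi> i j. (if i = j then [:0, 1:] else 0) - [:(SPM :: real ^ ('a \<times> 'a) ^ ('a \<times> 'a)) $ i $ j:])"

lemma charpoly_XP: "charpoly (SPM :: real ^ ('a::{comm_ring_1,finite} \<times> 'a) ^ ('a \<times> 'a)) = det (XP :: real poly ^ ('a \<times> 'a) ^ ('a \<times> 'a))"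
  unfolding charpoly_def XP_def ..

lemma charpoly_eval: "poly (charpoly (SPM :: real ^ ('a::{comm_ring_1,finite} \<times> 'a) ^ ('a \<times> 'a))) x =
   det (\<chi> i j. (if i = j then x else 0) - (SPM :: real ^ ('a \<times> 'a) ^ ('a \<times> 'a)) $ i $ j)"
proof -
  have e: "poly (if b then p else q) x = (if b then poly p x else poly q x)" for b p q by simp
  show ?thesis unfolding charpoly_def poly_det by (rule arg_cong[where f=det]) (simp add: vec_eq_iff e)
qed

lemma root_eig:
  assumes "poly (charpoly (SPM :: real ^ ('a::{comm_ring_1,finite} \<times> 'a) ^ ('a \<times> 'a))) l = 0"
  shows "\<exists>y. y \<noteq> 0 \<and> (SPM :: real ^ ('a \<times> 'a) ^ ('a \<times> 'a)) *v y = l *s y"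
proof -
  let ?X = "(\<chi> i j. (if i = j then l else 0) - (SPM :: real ^ ('a \<times> 'a) ^ ('a \<times> 'a)) $ i $ j)"
  obtain y where y: "y \<noteq> 0" "?X *v y = 0"
    using ker_if_det_zero[of ?X] assms unfolding charpoly_eval by blast
  have "(?X *v y) $ i = l * y $ i - (SPM *v y) $ i" for i
  proof -
    have t: "((if i = j then l else 0) - SPM $ i $ j) * y $ j = (if i = j then l * y $ j else 0) - SPM $ i $ j * y $ j" for j
      by (simp add: left_diff_distrib)
    have "(?X *v y) $ i = (\<Sum>j\<in>UNIV. (if i = j then l * y $ j else 0) - SPM $ i $ j * y $ j)"
      unfolding matrix_vector_mult_def by (simp only: vec_lambda_beta t)
    also have "\<dots> = l * y $ i - (SPM *v y) $ i"
      unfolding sum_subtractf matrix_vector_mult_def by simp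
    finally show ?thesis .
  qed
  then have "SPM *v y = l *s y" using y(2) by (simp add: vec_eq_iff)
  then show ?thesis using y(1) by blast
qed

context fvr
begin

definition C :: real where "C = real r * real CARD('a) * real (card (I 1))"

lemma eig_perp:
  assumes eig: "(SPM :: real ^ ('a \<times> 'a) ^ ('a \<times> 'a)) *v y = l *s y"
    and y0: "y \<noteq> 0" and s0: "(\<Sum>w\<in>UNIV. y $ w) = 0"
  shows "l^2 \<le> C"
proof -
  have "(\<Sum>u\<in>UNIV. ((SPM :: real ^ ('a \<times> 'a) ^ ('a \<times> 'a)) *v y) $ u ^ 2) \<le> C * (\<Sum>w\<in>UNIV. (y $ w)^2)"
    unfolding Mv C_def by (rule KB[of "\<lambda>w. y $ w"]) (use s0 in simp)
  moreover have "(\<Sum>u\<in>UNIV. ((SPM :: real ^ ('a \<times> 'a) ^ ('a \<times> 'a)) *v y) $ u ^ 2) = l^2 * (\<Sum>w\<in>UNIV. (y $ w)^2)"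
    unfolding eig by (simp add: power_mult_distrib sum_distrib_left)
  moreover have "(\<Sum>w\<in>UNIV. (y $ w)^2) > 0"
  proof -
    obtain w where "y $ w \<noteq> 0" using y0 by (auto simp: vec_eq_iff)
    then have "(y $ w)^2 > 0" by simp
    moreover have "(y $ w)^2 \<le> (\<Sum>w\<in>UNIV. (y $ w)^2)"
      by (rule member_le_sum) auto
    ultimately show ?thesis by linarith
  qed
  ultimately show ?thesis using mult_le_cancel_right_pos by simp
qed

lemma eig_cases:
  assumes eig: "(SPM :: real ^ ('a \<times> 'a) ^ ('a \<times> 'a)) *v y = l *s y" and y0: "y \<noteq> 0"
  shows "l = real CARD('a) \<or> l^2 \<le> C"
proof (cases "(\<Sum>w\<in>UNIV. y $ w) = 0")
  case True
  then show ?thesis using eig_perp[OF eig y0] by simp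
next
  case False
  have "real CARD('a) * (\<Sum>w\<in>UNIV. y $ w) = (\<Sum>u\<in>UNIV. ((SPM :: real ^ ('a \<times> 'a) ^ ('a \<times> 'a)) *v y) $ u)"
    by (rule Mv_sum[symmetric])
  also have "\<dots> = l * (\<Sum>w\<in>UNIV. y $ w)" unfolding eig by (simp add: sum_distrib_left)
  finally show ?thesis using False by simp
qed

lemma root_cases:
  assumes "poly (charpoly (SPM :: real ^ ('a \<times> 'a) ^ ('a \<times> 'a))) l = 0"
  shows "l = real CARD('a) \<or> l^2 \<le> C"
  using root_eig[OF assms] eig_cases by blast

end


lemma XM_comp:
  "((\<chi> i j. (if i = j then l else 0) - (SPM :: real ^ ('a::{comm_ring_1,finite} \<times> 'a) ^ ('a \<times> 'a)) $ i $ j) *v y) $ i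
     = l * y $ i - (SPM *v y) $ i"
proof -
  have t: "((if i = j then l else 0) - SPM $ i $ j) * y $ j = (if i = j then l * y $ j else 0) - SPM $ i $ j * y $ j" for j
    by (simp add: left_diff_distrib)
  have "((\<chi> i j. (if i = j then l else 0) - (SPM :: real ^ ('a \<times> 'a) ^ ('a \<times> 'a)) $ i $ j) *v y) $ i
      = (\<Sum>j\<in>UNIV. (if i = j then l * y $ j else 0) - SPM $ i $ j * y $ j)"
    unfolding matrix_vector_mult_def by (simp only: vec_lambda_beta t)
  also have "\<dots> = l * y $ i - (SPM *v y) $ i"
    unfolding sum_subtractf matrix_vector_mult_def by simp
  finally show ?thesis .
qed

lemma charpoly_factor:
  fixes k0 :: "'a::{comm_ring_1,finite} \<times> 'a"
  shows "charpoly (SPM :: real ^ ('a \<times> 'a) ^ ('a \<times> 'a)) =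
    [:- real CARD('a), 1:] * det (\<chi> i. if i = k0 then (vec 1 :: real poly ^ ('a \<times> 'a)) else row i (XP :: real poly ^ ('a \<times> 'a) ^ ('a \<times> 'a)))"
proof -
  let ?a = "real CARD('a)"
  have colsum: "(\<Sum>j\<in>UNIV. row j (XP :: real poly ^ ('a \<times> 'a) ^ ('a \<times> 'a))) = [:- ?a, 1:] *s vec 1"
  proof (rule iffD2[OF vec_eq_iff], rule allI)
    fix c :: "'a \<times> 'a"
    have "(\<Sum>j\<in>UNIV. row j (XP :: real poly ^ ('a \<times> 'a) ^ ('a \<times> 'a))) $ c
        = (\<Sum>j\<in>UNIV. (if j = c then [:0, 1:] else 0) - [:(SPM :: real ^ ('a \<times> 'a) ^ ('a \<times> 'a)) $ j $ c:])"
      by (simp add: sum_component row_def XP_def)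
    also have "\<dots> = [:0, 1:] - [:\<Sum>j\<in>UNIV. (SPM :: real ^ ('a \<times> 'a) ^ ('a \<times> 'a)) $ c $ j:]"
      by (simp add: sum_subtractf sum_pCons_const M_sym)
    also have "\<dots> = [:- ?a, 1:]" by (simp add: M_row_sum)
    finally show "(\<Sum>j\<in>UNIV. row j (XP :: real poly ^ ('a \<times> 'a) ^ ('a \<times> 'a))) $ c = ([:- ?a, 1:] *s vec 1) $ c"
      by simp
  qed
  have "charpoly (SPM :: real ^ ('a \<times> 'a) ^ ('a \<times> 'a)) =
     det (\<chi> i. if i = k0 then (\<Sum>j\<in>UNIV. row j XP) else row i (XP :: real poly ^ ('a \<times> 'a) ^ ('a \<times> 'a)))"
    unfolding charpoly_XP det_row_sum_all ..
  also have "\<dots> = det (\<chi> i. if i = k0 then [:- ?a, 1:] *s vec 1 else row i (XP :: real poly ^ ('a \<times> 'a) ^ ('a \<times> 'a)))"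
    unfolding colsum ..
  also have "\<dots> = [:- ?a, 1:] * det (\<chi> i. if i = k0 then (vec 1 :: real poly ^ ('a \<times> 'a)) else row i (XP :: real poly ^ ('a \<times> 'a) ^ ('a \<times> 'a)))"
    by (rule det_row_mul)
  finally show ?thesis .
qed

context fvr
begin

lemma G_nonzero:
  fixes k0 :: "'a \<times> 'a"
  assumes big: "C < (real CARD('a))^2"
  shows "poly (det (\<chi> i. if i = k0 then (vec 1 :: real poly ^ ('a \<times> 'a)) else row i (XP :: real poly ^ ('a \<times> 'a) ^ ('a \<times> 'a)))) (real CARD('a)) \<noteq> 0"
proof
  let ?a = "real CARD('a)"
  let ?R = "(\<chi> i j. if i = k0 then 1 else (if i = j then ?a else 0) - (SPM :: real ^ ('a \<times> 'a) ^ ('a \<times> 'a)) $ i $ j) :: real ^ ('a \<times> 'a) ^ ('a \<times> 'a)"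
  assume "poly (det (\<chi> i. if i = k0 then (vec 1 :: real poly ^ ('a \<times> 'a)) else row i (XP :: real poly ^ ('a \<times> 'a) ^ ('a \<times> 'a)))) ?a = 0"
  moreover have "poly (det (\<chi> i. if i = k0 then (vec 1 :: real poly ^ ('a \<times> 'a)) else row i (XP :: real poly ^ ('a \<times> 'a) ^ ('a \<times> 'a)))) ?a = det ?R"
    unfolding poly_det by (rule arg_cong[where f=det]) (simp add: vec_eq_iff row_def XP_def)
  ultimately have "det ?R = 0" by simp
  then obtain y where y: "y \<noteq> 0" "?R *v y = 0" using ker_if_det_zero by blast
  have s0: "(\<Sum>w\<in>UNIV. y $ w) = 0"
  proof -
    have "(?R *v y) $ k0 = (\<Sum>w\<in>UNIV. y $ w)" unfolding matrix_vector_mult_def by simp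
    then show ?thesis using y(2) by simp
  qed
  have rows: "(SPM *v y) $ i = ?a * y $ i" if "i \<noteq> k0" for i
  proof -
    have e1: "(?R *v y) $ i = ((\<chi> i j. (if i = j then ?a else 0) - (SPM :: real ^ ('a \<times> 'a) ^ ('a \<times> 'a)) $ i $ j) *v y) $ i"
      unfolding matrix_vector_mult_def using that by simp
    have "(?R *v y) $ i = 0" using y(2) by simp
    then have "((\<chi> i j. (if i = j then ?a else 0) - (SPM :: real ^ ('a \<times> 'a) ^ ('a \<times> 'a)) $ i $ j) *v y) $ i = 0"
      using e1 by simp
    then have "?a * y $ i - (SPM *v y) $ i = 0" unfolding XM_comp .
    then show ?thesis by simp
  qed
  have rowk: "(SPM *v y) $ k0 = ?a * y $ k0"
  proof -
    have "?a * (\<Sum>w\<in>UNIV. y $ w) = (\<Sum>u\<in>UNIV. ((SPM :: real ^ ('a \<times> 'a) ^ ('a \<times> 'a)) *v y) $ u)"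
      by (rule Mv_sum[symmetric])
    also have "\<dots> = (SPM *v y) $ k0 + (\<Sum>u\<in>UNIV - {k0}. (SPM *v y) $ u)"
      by (rule sum.remove) auto
    also have "(\<Sum>u\<in>UNIV - {k0}. (SPM *v y) $ u) = (\<Sum>u\<in>UNIV - {k0}. ?a * y $ u)"
      by (rule sum.cong) (auto simp: rows)
    also have "\<dots> = ?a * ((\<Sum>u\<in>UNIV. y $ u) - y $ k0)"
      by (simp add: sum_distrib_left[symmetric] sum_diff1)
    finally show ?thesis using s0 by simp
  qed
  have "(SPM *v y) $ i = (?a *s y) $ i" for i
    by (cases "i = k0") (simp_all add: rows rowk)
  then have "SPM *v y = ?a *s y" by (simp add: vec_eq_iff)
  then have "?a^2 \<le> C" using eig_perp y(1) s0 by blast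
  then show False using big by simp
qed

end

lemma root0: "poly (charpoly (SPM :: real ^ ('a::{comm_ring_1,finite} \<times> 'a) ^ ('a \<times> 'a))) 0 = 0"
proof -
  define g :: "'a \<Rightarrow> real" where "g d = (if d = 0 then 1 else 0) - (if d = 1 then 1 else 0)" for d
  define y :: "real ^ ('a \<times> 'a)" where "y = (\<chi> w. g (snd w))"
  let ?X = "(\<chi> i j. (if i = j then 0 else 0) - (SPM :: real ^ ('a \<times> 'a) ^ ('a \<times> 'a)) $ i $ j)"
  have y0: "y \<noteq> 0"
  proof
    assume "y = 0"
    then have "y $ (0, 0) = 0" by simp
    then show False unfolding y_def g_def by simp
  qed
  have sg: "(\<Sum>d\<in>UNIV. g d) = 0" unfolding g_def by (simp add: sum_subtractf)
  have "(?X *v y) $ i = 0" for i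
  proof -
    have "(?X *v y) $ i = 0 * y $ i - (SPM *v y) $ i" by (rule XM_comp)
    also have "(SPM *v y) $ i = (\<Sum>d\<in>UNIV. g d)" unfolding Mv y_def by simp
    finally show ?thesis using sg by simp
  qed
  then have "?X *v y = 0" by (simp add: vec_eq_iff)
  then have "det ?X = 0" using det_zero_if_ker y0 by blast
  then show ?thesis unfolding charpoly_eval .
qed

theorem lemma3p2:
  fixes z :: "'a::{comm_ring_1,finite}" and q r :: nat
  assumes "finite_valuation_ring TYPE('a)"
    and "maximal_ideal (principal_ideal z)"
    and "q = card (quotient_cosets (principal_ideal z))"
    and "r = (LEAST k. z ^ k = 0)"
  shows "CARD('a \<times> 'a) = q ^ (2 * r)
    \<and> (\<forall>v. (\<Sum>w\<in>UNIV. (sum_product_matrix :: real ^ ('a \<times> 'a) ^ ('a \<times> 'a)) $ v $ w) = real (q ^ r))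
    \<and> second_eigenvalue (sum_product_matrix :: real ^ ('a \<times> 'a) ^ ('a \<times> 'a))
        \<le> sqrt (2 * real r * real q ^ (2 * r - 1))"
proof -
  interpret F: fvr z using assms(1,2) by unfold_locales
  have q: "q = F.q" using assms(3) F.q_def by simp
  have r: "r = F.r" using assms(4) F.r_def by simp
  have cardR: "CARD('a) = q ^ r" using F.card_R q r by simp
  have I1: "card (F.I 1) = q ^ (r - 1)" using F.card_I1_pow q r by simp
  have r1: "r \<ge> 1" unfolding r by (rule F.r_pos)
  have part1: "CARD('a \<times> 'a) = q ^ (2 * r)"
  proof -
    have "CARD('a \<times> 'a) = CARD('a) * CARD('a)"
      by (metis UNIV_Times_UNIV card_cartesian_product)
    also have "\<dots> = q ^ (2 * r)" unfolding cardR by (simp add: power_add[symmetric] mult_2)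
    finally show ?thesis .
  qed
  have part2: "\<forall>v. (\<Sum>w\<in>UNIV. (sum_product_matrix :: real ^ ('a \<times> 'a) ^ ('a \<times> 'a)) $ v $ w) = real (q ^ r)"
    using M_row_sum[where 'a='a] cardR by simp
  define a where "a = real CARD('a)"
  define B where "B = sqrt (2 * real r * real q ^ (2 * r - 1))"
  have a_pos: "a \<ge> 1" unfolding a_def by simp
  have C_eq: "F.C = real r * real q ^ (2 * r - 1)"
  proof -
    have "F.C = real r * (real q ^ r * real q ^ (r - 1))"
      unfolding F.C_def r[symmetric] cardR I1 by simp
    also have "real q ^ r * real q ^ (r - 1) = real q ^ (2 * r - 1)"
      using r1 by (simp add: power_add[symmetric] mult_2)
    finally show ?thesis .
  qed
  have C_nn: "F.C \<ge> 0" unfolding C_eq by simp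
  have B_eq: "B = sqrt (2 * F.C)" unfolding B_def C_eq by (simp add: mult.assoc)
  have B_nn: "B \<ge> 0" unfolding B_def by simp
  have sqC: "sqrt F.C \<le> B" unfolding B_eq using C_nn by (intro real_sqrt_le_mono) simp
  have small: "l \<le> B \<and> - l \<le> B" if "l^2 \<le> F.C" for l
  proof -
    have "\<bar>l\<bar> = sqrt (l^2)" by simp
    also have "\<dots> \<le> sqrt F.C" using that by (rule real_sqrt_le_mono)
    finally show ?thesis using sqC by linarith
  qed
  let ?M = "sum_product_matrix :: real ^ ('a \<times> 'a) ^ ('a \<times> 'a)"
  define p where "p = charpoly ?M"
  define G where "G = det (\<chi> i. if i = undefined then (vec 1 :: real poly ^ ('a \<times> 'a)) else row i (XP :: real poly ^ ('a \<times> 'a) ^ ('a \<times> 'a)))"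
  have pf: "p = [:- a, 1:] * G" unfolding p_def G_def a_def by (rule charpoly_factor)
  have roots: "l = a \<or> l^2 \<le> F.C" if "poly p l = 0" for l
    using F.root_cases that unfolding p_def a_def by blast
  have p0: "p \<noteq> 0"
  proof
    assume "p = 0"
    define x0 where "x0 = a + F.C + 1"
    have "poly p x0 = 0" using \<open>p = 0\<close> by simp
    then have "x0 = a \<or> x0^2 \<le> F.C" by (rule roots)
    moreover have "x0 \<noteq> a" unfolding x0_def using C_nn by simp
    moreover have "x0^2 > F.C"
    proof -
      have "x0 \<ge> 1" unfolding x0_def using C_nn a_pos by simp
      then have "x0 \<le> x0^2" by (simp add: power2_eq_square)
      moreover have "x0 > F.C" unfolding x0_def using a_pos by simp
      ultimately show ?thesis by linarith
    qed
    ultimately show False by linarith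
  qed
  have rt0: "poly p 0 = 0" unfolding p_def by (rule root0)
  have rta: "poly p a = 0" unfolding pf by simp
  have a0: "a \<noteq> 0" using a_pos by simp
  define L where "L = eigenvalues_desc ?M"
  have L_def': "L = rev (sorted_list_of_multiset (proots p))"
    unfolding L_def eigenvalues_desc_def p_def ..
  have setL: "set L = {x. poly p x = 0}" unfolding L_def' using p0 by simp
  have mL: "mset L = proots p" unfolding L_def' by simp
  have sortedL: "sorted_wrt (\<ge>) L" unfolding L_def' by (simp add: sorted_wrt_rev)
  have lenL: "length L \<ge> 2"
  proof -
    have "{0, a} \<subseteq> set L" using setL rt0 rta by auto
    then have "card {0, a} \<le> card (set L)" by (intro card_mono) auto
    moreover have "card {0, a} = 2" using a0 by simp
    moreover have "card (set L) \<le> length L" by (rule card_length)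
    ultimately show ?thesis by linarith
  qed
  have rootL: "poly p x = 0" if "x \<in> set L" for x using that setL by blast
  have L01: "L ! 1 \<le> L ! 0" using sorted_wrt_nth_less[OF sortedL, of 0 1] lenL by simp
  have r0: "poly p (L ! 0) = 0" using lenL by (intro rootL nth_mem) linarith
  have r1': "poly p (L ! 1) = 0" using lenL by (intro rootL nth_mem) linarith
  have second: "L ! 1 \<le> B"
  proof (cases "(L ! 1)^2 \<le> F.C")
    case True then show ?thesis using small by blast
  next
    case False
    then have l1a: "L ! 1 = a" using roots[OF r1'] by blast
    show ?thesis
    proof (rule ccontr)
      assume "\<not> L ! 1 \<le> B"
      then have aB: "a > B" using l1a by simp
      have big: "F.C < a^2"
      proof -
        have "sqrt F.C < a" using sqC aB by linarith
        then have "sqrt F.C ^ 2 < a ^ 2" using C_nn by (intro power_strict_mono) auto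
        then show ?thesis using C_nn by simp
      qed
      have l0a: "L ! 0 = a"
      proof (rule ccontr)
        assume "L ! 0 \<noteq> a"
        then have "(L ! 0)^2 \<le> F.C" using roots[OF r0] by blast
        moreover have "a^2 \<le> (L ! 0)^2" using L01 l1a a_pos by (intro power_mono) auto
        ultimately show False using big by linarith
      qed
      obtain x0 L' where L1: "L = x0 # L'" using lenL by (cases L) auto
      obtain x1 rest where L2: "L' = x1 # rest" using lenL L1 by (cases L') auto
      have "x0 = a" "x1 = a" using l0a l1a L1 L2 by simp_all
      then have "count (mset L) a \<ge> 2" unfolding L1 L2 by simp
      then have ord2: "order a p \<ge> 2" unfolding mL using p0 by simp
      have "poly G a \<noteq> 0" unfolding G_def a_def by (rule F.G_nonzero) (use big a_def in simp)
      then have "order a G = 0" using order_root by blast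
      moreover have "order a [:- a, 1:] = 1" using order_power_n_n[of a 1] by simp
      moreover have "order a p = order a [:- a, 1:] + order a G"
        unfolding pf by (rule order_mult) (use p0 pf in simp)
      ultimately show False using ord2 by simp
    qed
  qed
  have lastB: "- last L \<le> B"
  proof -
    have "L \<noteq> []" using lenL by (cases L) auto
    then have "poly p (last L) = 0" by (intro rootL last_in_set)
    then have "last L = a \<or> (last L)^2 \<le> F.C" by (rule roots)
    then show ?thesis using small a_pos B_nn by auto
  qed
  have part3: "second_eigenvalue ?M \<le> B"
    unfolding second_eigenvalue_def L_def[symmetric] using second lastB by simp
  show ?thesis using part1 part2 part3 unfolding B_def by blast
qed


end
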